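(* Let $G$ be a finite simple graph. Then the independence attractor $\mathcal{A}(G)$ of $G$ is not a circle.
   Context: For a finite simple graph $G$, an independent set is a set of pairwise non-adjacent vertices. The independence polynomial is $I_G(z)=\sum_{i=0}^{\alpha} a_i z^i$, where $a_i$ is the number of independent sets of cardinality $i$ (so $a_0=1$) and $\alpha$ (the independence number) is the largest cardinality of an independent set. The lexicographic product $G[H]$ has vertex set $V(G)\times V(H)$, with $(u,v)\sim(u',v')$ iff $u\sim u'$ in $G$, or $u=u'$ and $v\sim v'$ in $H$. Let $G^1=G$ and $G^{m}=G[G^{m-1}]$ denote the $m$-fold lexicographic product of $G$ with itself. The independence attractor is $\mathcal{A}(G)=\lim_{m\to\infty}\{z\in\mathbb{C}: I_{G^m}(z)=0\}$, the limit taken in the Hausdorff metric on nonempty compact subsets of $\mathbb{C}$. (Equivalently, with $P_G=I_G-1$, $\mathcal{A}(G)=\lim_{m\to\infty}\{z: P_G^m(z)=-1\}$, where $P_G^m$ is the $m$-th iterate.) *)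

theory Defs
  imports "HOL-Analysis.Analysis"
begin

definition finite_simple_graph :: "'a set \<Rightarrow> ('a \<Rightarrow> 'a \<Rightarrow> bool) \<Rightarrow> bool" where
  "finite_simple_graph V E \<longleftrightarrow> finite V \<and> (\<forall>x y. E x y \<longrightarrow> x \<in> V \<and> y \<in> V)
     \<and> (\<forall>x y. E x y \<longrightarrow> E y x) \<and> (\<forall>x. \<not> E x x)"

definition independent_set :: "('a \<Rightarrow> 'a \<Rightarrow> bool) \<Rightarrow> 'a set \<Rightarrow> bool" where
  "independent_set E S \<longleftrightarrow> (\<forall>x\<in>S. \<forall>y\<in>S. \<not> E x y)"

definition indep_poly :: "'a set \<Rightarrow> ('a \<Rightarrow> 'a \<Rightarrow> bool) \<Rightarrow> complex \<Rightarrow> complex" where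
  "indep_poly V E z = (\<Sum>S\<in>{S. S \<subseteq> V \<and> independent_set E S}. z ^ card S)"

text \<open>m-fold lexicographic power G^m: vertices are lists of length m over V
  (the list u # w represents the pair (u,w) of G[G^(m-1)]); two such lists are
  adjacent iff at the first position where they differ, the entries are adjacent
  in G.  This unfolds exactly G^1 = G and G^m = G[G^(m-1)].\<close>
definition lex_power_vertices :: "'a set \<Rightarrow> nat \<Rightarrow> 'a list set" where
  "lex_power_vertices V m = {xs. length xs = m \<and> set xs \<subseteq> V}"

definition lex_power_adj :: "('a \<Rightarrow> 'a \<Rightarrow> bool) \<Rightarrow> 'a list \<Rightarrow> 'a list \<Rightarrow> bool" where
  "lex_power_adj E xs ys \<longleftrightarrow> length xs = length ys \<and>
     (\<exists>i < length xs. take i xs = take i ys \<and> E (xs ! i) (ys ! i))"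

definition lex_power_zeros :: "'a set \<Rightarrow> ('a \<Rightarrow> 'a \<Rightarrow> bool) \<Rightarrow> nat \<Rightarrow> complex set" where
  "lex_power_zeros V E m =
     {z. indep_poly (lex_power_vertices V m) (lex_power_adj E) z = 0}"

definition hausdorff_dist :: "complex set \<Rightarrow> complex set \<Rightarrow> real" where
  "hausdorff_dist S T = max (SUP x\<in>S. infdist x T) (SUP y\<in>T. infdist y S)"

definition hausdorff_converges :: "(nat \<Rightarrow> complex set) \<Rightarrow> complex set \<Rightarrow> bool" where
  "hausdorff_converges Z A \<longleftrightarrow> A \<noteq> {} \<and> compact A \<and>
     (\<forall>\<^sub>F m in sequentially. Z m \<noteq> {} \<and> compact (Z m)) \<and>
     ((\<lambda>m. hausdorff_dist (Z m) A) \<longlonglongrightarrow> 0)"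

definition is_circle :: "complex set \<Rightarrow> bool" where
  "is_circle A \<longleftrightarrow> (\<exists>c r. r > 0 \<and> A = sphere c r)"

end

theory Submission
  imports Defs "HOL-Computational_Algebra.Fundamental_Theorem_Algebra"
begin


definition ISet :: "'a set \<Rightarrow> ('a \<Rightarrow> 'a \<Rightarrow> bool) \<Rightarrow> 'a set set" where
  "ISet V E = {S. S \<subseteq> V \<and> independent_set E S}"

definition Pg :: "'a set \<Rightarrow> ('a \<Rightarrow> 'a \<Rightarrow> bool) \<Rightarrow> complex \<Rightarrow> complex" where
  "Pg V E z = indep_poly V E z - 1"

lemma finite_ISet: "finite V \<Longrightarrow> finite (ISet V E)"
  unfolding ISet_def by (rule finite_subset[of _ "Pow V"]) auto

lemma indep_poly_ISet: "indep_poly V E z = (\<Sum>S\<in>ISet V E. z ^ card S)"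
  unfolding indep_poly_def ISet_def by simp

lemma Pg_eq: assumes "finite V"
  shows "Pg V E z = (\<Sum>S\<in>ISet V E - {{}}. z ^ card S)"
proof -
  have "{} \<in> ISet V E" unfolding ISet_def independent_set_def by auto
  then have "indep_poly V E z = z ^ card ({}::'a set) + (\<Sum>S\<in>ISet V E - {{}}. z ^ card S)"
    unfolding indep_poly_ISet using sum.remove[OF finite_ISet[OF assms]] by blast
  then show ?thesis unfolding Pg_def by simp
qed

lemma compose:
  fixes V :: "'a set" and W :: "'a list set"
  assumes fV: "finite V" and fW: "finite W" and irr: "\<forall>x. \<not> E x x"
    and VW: "VW = {x # w | x w. x \<in> V \<and> w \<in> W}"
    and Adj: "\<forall>x xs y ys. x \<in> V \<longrightarrow> xs \<in> W \<longrightarrow> y \<in> V \<longrightarrow> ys \<in> W \<longrightarrow>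
        Adj (x # xs) (y # ys) = (E x y \<or> (x = y \<and> AH xs ys))"
  shows "indep_poly VW Adj z = indep_poly V E (Pg W AH z)"
proof -
  define NI where "NI = ISet W AH - {{}}"
  define Sig where "Sig = (SIGMA T: ISet V E. PiE T (\<lambda>_. NI))"
  define phi where "phi = (\<lambda>(T, f). (\<Union>x\<in>T. (#) x ` (f x :: 'a list set)))"
  define psi where "psi = (\<lambda>S::'a list set. (hd ` S, restrict (\<lambda>x. {w. x # w \<in> S}) (hd ` S)))"
  have fNI: "finite NI" unfolding NI_def using finite_ISet[OF fW] by auto
  have NI: "U \<in> NI \<longleftrightarrow> U \<subseteq> W \<and> independent_set AH U \<and> U \<noteq> {}" for U
    unfolding NI_def ISet_def by auto
  have fT: "T \<in> ISet V E \<Longrightarrow> finite T" for T unfolding ISet_def using fV finite_subset by auto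
  have fU: "U \<in> NI \<Longrightarrow> finite U" for U using NI fW finite_subset by auto
  have "indep_poly V E (Pg W AH z) = (\<Sum>T\<in>ISet V E. (\<Sum>U\<in>NI. z ^ card U) ^ card T)"
    unfolding indep_poly_ISet Pg_eq[OF fW] NI_def ..
  also have "\<dots> = (\<Sum>T\<in>ISet V E. \<Prod>x\<in>T. \<Sum>U\<in>NI. z ^ card U)"
    by simp
  also have "\<dots> = (\<Sum>T\<in>ISet V E. \<Sum>f\<in>PiE T (\<lambda>_. NI). \<Prod>x\<in>T. z ^ card (f x))"
    by (rule sum.cong[OF refl], rule prod_sum_PiE) (auto simp: fT fNI)
  also have "\<dots> = (\<Sum>T\<in>ISet V E. \<Sum>f\<in>PiE T (\<lambda>_. NI). z ^ (\<Sum>x\<in>T. card (f x)))"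
    by (simp add: power_sum)
  also have "\<dots> = (\<Sum>(T,f)\<in>Sig. z ^ (\<Sum>x\<in>T. card (f x)))"
    unfolding Sig_def
    by (rule sum.Sigma) (auto simp: finite_ISet fV fT fNI finite_PiE)
  also have "\<dots> = (\<Sum>S\<in>ISet VW Adj. z ^ card S)"
  proof -
    have bij: "bij_betw phi Sig (ISet VW Adj)"
    proof (rule bij_betw_byWitness[where f' = psi])
      show "\<forall>a\<in>Sig. psi (phi a) = a"
      proof
        fix a assume "a \<in> Sig"
        then obtain T f where a: "a = (T, f)" "T \<in> ISet V E" "f \<in> PiE T (\<lambda>_. NI)"
          unfolding Sig_def by auto
        have ne: "x \<in> T \<Longrightarrow> f x \<noteq> {}" for x using a NI by auto
        have h1: "hd ` phi a = T"
          using ne unfolding a phi_def by (auto simp: image_iff) (metis ex_in_conv list.sel(1))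
        have h2: "x \<in> T \<Longrightarrow> {w. x # w \<in> phi a} = f x" for x
          unfolding a phi_def by auto
        show "psi (phi a) = a" unfolding psi_def h1 using a(3) h2
          by (auto simp: a(1) PiE_def extensional_def restrict_def fun_eq_iff)
      qed
      show "\<forall>S\<in>ISet VW Adj. phi (psi S) = S"
      proof
        fix S assume S: "S \<in> ISet VW Adj"
        have cons: "\<forall>s\<in>S. \<exists>x w. s = x # w" using S unfolding ISet_def VW by auto
        have e: "phi (psi S) = (\<Union>x\<in>hd ` S. (#) x ` {w. x # w \<in> S})"
          unfolding phi_def psi_def by simp
        show "phi (psi S) = S" unfolding e
        proof
          show "(\<Union>x\<in>hd ` S. (#) x ` {w. x # w \<in> S}) \<subseteq> S" by blast
          show "S \<subseteq> (\<Union>x\<in>hd ` S. (#) x ` {w. x # w \<in> S})"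
          proof
            fix s assume "s \<in> S"
            with cons obtain x w where "s = x # w" by blast
            with \<open>s \<in> S\<close> show "s \<in> (\<Union>x\<in>hd ` S. (#) x ` {w. x # w \<in> S})"
              by (intro UN_I[of x]) (force, simp)
          qed
        qed
      qed
      show "phi ` Sig \<subseteq> ISet VW Adj"
      proof
        fix S assume "S \<in> phi ` Sig"
        then obtain T f where S: "S = phi (T, f)" "T \<in> ISet V E" "f \<in> PiE T (\<lambda>_. NI)"
          unfolding Sig_def by auto
        have T: "T \<subseteq> V" "independent_set E T" using S(2) unfolding ISet_def by auto
        have F: "x \<in> T \<Longrightarrow> f x \<subseteq> W \<and> independent_set AH (f x)" for x using S(3) NI by auto
        have "S \<subseteq> VW" unfolding S phi_def VW using T F by fastforce
        moreover have "independent_set Adj S"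
          unfolding independent_set_def
        proof (intro ballI)
          fix s t assume "s \<in> S" "t \<in> S"
          then obtain x xs y ys where st: "s = x # xs" "t = y # ys" "x \<in> T" "y \<in> T"
            "xs \<in> f x" "ys \<in> f y" unfolding S phi_def by auto
          show "\<not> Adj s t" using Adj T F st unfolding independent_set_def by blast
        qed
        ultimately show "S \<in> ISet VW Adj" unfolding ISet_def by auto
      qed
      show "psi ` ISet VW Adj \<subseteq> Sig"
      proof
        fix P assume "P \<in> psi ` ISet VW Adj"
        then obtain S where P: "P = psi S" and S: "S \<subseteq> VW" "independent_set Adj S"
          unfolding ISet_def by auto
        have mem: "s \<in> S \<Longrightarrow> \<exists>x w. s = x # w \<and> x \<in> V \<and> w \<in> W" for s using S VW by auto
        have "hd ` S \<in> ISet V E"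
          unfolding ISet_def independent_set_def
        proof (auto)
          fix s assume "s \<in> S" then show "hd s \<in> V" using mem by force
        next
          fix s t assume "s \<in> S" "t \<in> S" "E (hd s) (hd t)"
          then show False using mem[of s] mem[of t] S(2) Adj unfolding independent_set_def
            by (metis list.sel(1))
        qed
        moreover have "{w. x # w \<in> S} \<in> NI" if "x \<in> hd ` S" for x
          unfolding NI independent_set_def
        proof (intro conjI ballI)
          show "{w. x # w \<in> S} \<subseteq> W" using mem by fastforce
          show "{w. x # w \<in> S} \<noteq> {}" using that mem by fastforce
          fix xs ys assume "xs \<in> {w. x # w \<in> S}" "ys \<in> {w. x # w \<in> S}"
          then have m: "x # xs \<in> S" "x # ys \<in> S" by auto
          then have "x \<in> V" "xs \<in> W" "ys \<in> W" using mem[of "x # xs"] mem[of "x # ys"] by auto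
          moreover have "\<not> Adj (x # xs) (x # ys)" using S(2) m unfolding independent_set_def by blast
          ultimately show "\<not> AH xs ys" using Adj by blast
        qed
        ultimately show "P \<in> Sig" unfolding P psi_def Sig_def by auto
      qed
    qed
    have "(\<Sum>(T,f)\<in>Sig. z ^ (\<Sum>x\<in>T. card (f x))) = (\<Sum>a\<in>Sig. z ^ card (phi a))"
    proof (rule sum.cong[OF refl])
      fix a assume "a \<in> Sig"
      then obtain T f where a: "a = (T, f)" "T \<in> ISet V E" "f \<in> PiE T (\<lambda>_. NI)"
        unfolding Sig_def by auto
      have "card (phi a) = (\<Sum>x\<in>T. card ((#) x ` f x))"
        unfolding a phi_def using a fT fU
        by (auto intro!: card_UN_disjoint)
      also have "\<dots> = (\<Sum>x\<in>T. card (f x))"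
        by (rule sum.cong) (auto intro: card_image)
      finally show "(case a of (T,f) \<Rightarrow> z ^ (\<Sum>x\<in>T. card (f x))) = z ^ card (phi a)"
        using a by simp
    qed
    also have "\<dots> = (\<Sum>S\<in>ISet VW Adj. z ^ card S)"
      using sum.reindex_bij_betw[OF bij, of "\<lambda>S. z ^ card S"] .
    finally show ?thesis .
  qed
  finally show ?thesis unfolding indep_poly_ISet ..
qed


lemma lpv_Suc: "lex_power_vertices V (Suc m) = {x # w | x w. x \<in> V \<and> w \<in> lex_power_vertices V m}"
  unfolding lex_power_vertices_def by (auto simp: length_Suc_conv)

lemma lpv_0: "lex_power_vertices V 0 = {[]}"
  unfolding lex_power_vertices_def by auto

lemma finite_lpv: "finite V \<Longrightarrow> finite (lex_power_vertices V m)"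
proof (induction m)
  case (Suc m)
  have "{x # w | x w. x \<in> V \<and> w \<in> lex_power_vertices V m} = (\<lambda>(x,w). x # w) ` (V \<times> lex_power_vertices V m)"
    by auto
  then show ?case using Suc by (simp add: lpv_Suc)
qed (simp add: lpv_0)

lemma lpa_Cons:
  assumes "length xs = length ys"
  shows "lex_power_adj E (x # xs) (y # ys) = (E x y \<or> (x = y \<and> lex_power_adj E xs ys))"
proof
  assume "lex_power_adj E (x # xs) (y # ys)"
  then obtain i where i: "i < Suc (length xs)" "take i (x # xs) = take i (y # ys)"
    "E ((x # xs) ! i) ((y # ys) ! i)" unfolding lex_power_adj_def by auto
  show "E x y \<or> (x = y \<and> lex_power_adj E xs ys)"
  proof (cases i)
    case 0 then show ?thesis using i by auto
  next
    case (Suc j) then show ?thesis using i assms unfolding lex_power_adj_def by auto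
  qed
next
  assume h: "E x y \<or> (x = y \<and> lex_power_adj E xs ys)"
  show "lex_power_adj E (x # xs) (y # ys)"
  proof (cases "E x y")
    case True then show ?thesis using assms unfolding lex_power_adj_def
      by (intro conjI exI[of _ 0]) auto
  next
    case False
    then obtain j where j: "j < length xs" "take j xs = take j ys" "E (xs ! j) (ys ! j)" "x = y"
      using h unfolding lex_power_adj_def by auto
    then show ?thesis using assms unfolding lex_power_adj_def
      by (intro conjI exI[of _ "Suc j"]) auto
  qed
qed

lemma Pm_0: "Pg (lex_power_vertices V 0) (lex_power_adj E) z = z"
proof -
  have "ISet {[]} (lex_power_adj E) = {{}, {[]}}"
    unfolding ISet_def independent_set_def lex_power_adj_def by auto
  then show ?thesis unfolding Pg_def indep_poly_ISet lpv_0 by simp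
qed

lemma Pm_Suc:
  assumes "finite V" "\<forall>x. \<not> E x x"
  shows "Pg (lex_power_vertices V (Suc m)) (lex_power_adj E) z
       = Pg V E (Pg (lex_power_vertices V m) (lex_power_adj E) z)"
proof -
  have "indep_poly (lex_power_vertices V (Suc m)) (lex_power_adj E) z
      = indep_poly V E (Pg (lex_power_vertices V m) (lex_power_adj E) z)"
  proof (rule compose[where E=E and V=V])
    show "finite V" "finite (lex_power_vertices V m)" "\<forall>x. \<not> E x x"
      using assms finite_lpv by auto
    show "lex_power_vertices V (Suc m) = {x # w | x w. x \<in> V \<and> w \<in> lex_power_vertices V m}"
      by (rule lpv_Suc)
  qed (auto intro!: lpa_Cons simp: lex_power_vertices_def)
  then show ?thesis unfolding Pg_def by simp
qed

lemma Pm_funpow: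
  assumes "finite V" "\<forall>x. \<not> E x x"
  shows "Pg (lex_power_vertices V m) (lex_power_adj E) z = (Pg V E ^^ m) z"
  by (induction m arbitrary: z) (simp_all add: Pm_0 Pm_Suc[where V=V and E=E, OF assms])

lemma zeros_funpow:
  assumes "finite V" "\<forall>x. \<not> E x x"
  shows "lex_power_zeros V E m = {z. (Pg V E ^^ m) z = -1}"
proof -
  have e: "indep_poly (lex_power_vertices V m) (lex_power_adj E) z = (Pg V E ^^ m) z + 1" for z
    using Pm_funpow[where V=V and E=E, OF assms, of m z]
    by (simp add: Pg_def[of "lex_power_vertices V m"] algebra_simps)
  show ?thesis unfolding lex_power_zeros_def e by (auto simp: add_eq_0_iff, metis minus_minus)
qed


lemma infinite_circle:
  assumes "r > 0"
  shows "infinite {w::complex. norm w = r}"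
proof
  assume fin: "finite {w::complex. norm w = r}"
  define g where "g = (\<lambda>x. Complex x (sqrt (r^2 - x^2)))"
  have "g ` {-r..r} \<subseteq> {w. norm w = r}"
  proof
    fix w assume "w \<in> g ` {-r..r}"
    then obtain x where x: "x \<in> {-r..r}" "w = g x" by auto
    then have "\<bar>x\<bar> \<le> r" by auto
    then have "\<bar>x\<bar>^2 \<le> r^2" by (rule power_mono) simp
    then have "x^2 \<le> r^2" by simp
    then show "w \<in> {w. norm w = r}" using x assms unfolding g_def
      by (simp add: complex_norm)
  qed
  moreover have "inj_on g {-r..r}" unfolding g_def inj_on_def by auto
  ultimately have "finite {-r..r}"
    using fin by (metis finite_imageD finite_subset)
  then show False using assms infinite_Icc[of "-r" r] by simp
qed

lemma poly_zero_on_infinite: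
  fixes p :: "complex poly"
  assumes "infinite S" "\<forall>w\<in>S. poly p w = 0"
  shows "p = 0"
proof (rule ccontr)
  assume "p \<noteq> 0"
  then have "finite {x. poly p x = 0}" by (rule poly_roots_finite)
  moreover have "S \<subseteq> {x. poly p x = 0}" using assms by auto
  ultimately show False using assms finite_subset by blast
qed

lemma circle_poly:
  fixes p :: "complex poly" and c :: complex and r :: real
  assumes conj: "\<forall>z. poly p (cnj z) = cnj (poly p z)" and r: "r > 0"
    and inv: "\<forall>z. dist c z = r \<longrightarrow> dist c (poly p z) = r"
  shows "\<exists>\<mu> k. \<mu> \<noteq> 0 \<and> p = [:c:] + smult \<mu> ([:-c,1:]^k)"
proof -
  define F where "F = pcompose p [:c,1:] - [:c:]"
  define G where "G = pcompose p [:cnj c,1:] - [:cnj c:]"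
  define H where "H = pcompose G [:0, complex_of_real (r^2):]"
  define R where "R = reflect_poly H"
  define d where "d = degree H"
  have pF: "poly F w = poly p (c + w) - c" for w unfolding F_def by (simp add: poly_pcompose)
  have pH: "poly H u = poly p (cnj c + of_real (r^2) * u) - cnj c" for u
    unfolding H_def G_def by (simp add: poly_pcompose mult.commute)
  have key: "poly (F * R - monom (of_real (r^2)) d) w = 0" if w: "w \<in> {w. norm w = r}" for w
  proof -
    have nw: "norm w = r" using w by simp
    then have w0: "w \<noteq> 0" using r by auto
    have ww: "w * cnj w = of_real (r^2)" using nw complex_norm_square[of w] by simp
    then have cw: "cnj w = of_real (r^2) * inverse w" using w0 by (simp add: field_simps)
    have "dist c (c + w) = r" using nw by (simp add: dist_norm)
    then have "dist c (poly p (c + w)) = r" using inv by blast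
    then have nn: "norm (poly p (c + w) - c) = r" by (simp add: dist_norm norm_minus_commute)
    have "cnj (poly p (c + w) - c) = poly p (cnj c + cnj w) - cnj c"
      using conj[rule_format, of "c + w"] by simp
    also have "\<dots> = poly H (inverse w)" unfolding pH cw ..
    finally have ch: "cnj (poly F w) = poly H (inverse w)" unfolding pF .
    have "poly F w * cnj (poly F w) = of_real (r^2)"
      using nn complex_norm_square[of "poly F w"] unfolding pF by simp
    then have "poly F w * poly H (inverse w) = of_real (r^2)" using ch by simp
    then have "poly (F * R) w = of_real (r^2) * w ^ d"
      unfolding R_def d_def using w0 by (simp add: poly_reflect_poly_nz)
    then show ?thesis by (simp add: poly_monom)
  qed
  have FR: "F * R = monom (of_real (r^2)) d"
  proof -
    have "F * R - monom (of_real (r^2)) d = 0"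
      by (rule poly_zero_on_infinite[OF infinite_circle[OF r]]) (use key in blast)
    then show ?thesis by simp
  qed
  have F0: "F \<noteq> 0" using FR r by (auto simp: monom_eq_0_iff)
  have roots: "poly F w = 0 \<Longrightarrow> w = 0" for w
  proof -
    assume "poly F w = 0"
    then have "poly (monom (of_real (r^2)) d) w = 0" unfolding FR[symmetric] by simp
    then have "of_real (r^2) * w ^ d = (0::complex)" by (simp add: poly_monom)
    then show "w = 0" using r by auto
  qed
  obtain q where q: "F = [:- 0, 1:] ^ order 0 F * q" "\<not> [:- 0, 1:] dvd q"
    using order_decomp[OF F0] by blast
  define k where "k = order 0 F"
  have qnz: "poly q w \<noteq> 0" for w
  proof
    assume h: "poly q w = 0"
    show False
    proof (cases "w = 0")
      case True then show False using h q(2) by (simp add: poly_eq_0_iff_dvd)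
    next
      case False
      have "poly F w = 0" by (subst q(1)) (simp add: h)
      then show False using roots False by blast
    qed
  qed
  have "constant (poly q)"
    using fundamental_theorem_of_algebra[of q] qnz by blast
  then have qc: "poly q w = poly q 0" for w unfolding constant_def by blast
  define \<mu> where "\<mu> = poly q 0"
  have mu0: "\<mu> \<noteq> 0" unfolding \<mu>_def using qnz by blast
  have pF2: "poly F w = \<mu> * w ^ k" for w
    by (subst q(1)) (simp add: qc[of w] \<mu>_def k_def mult.commute)
  have "poly p z = poly ([:c:] + smult \<mu> ([:-c,1:]^k)) z" for z
  proof -
    have "poly p z = poly F (z - c) + c" unfolding pF by simp
    also have "\<dots> = c + \<mu> * (z - c) ^ k" unfolding pF2 by simp
    finally show ?thesis by (simp add: poly_power)
  qed
  then have "p = [:c:] + smult \<mu> ([:-c,1:]^k)"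
    using poly_eq_poly_eq_iff by blast
  then show ?thesis using mu0 by blast
qed


lemma hd_L1:
  assumes "compact A" "a \<in> A"
  shows "infdist a Z \<le> hausdorff_dist Z A"
proof -
  have "compact ((\<lambda>y. infdist y Z) ` A)"
    by (rule compact_continuous_image[OF continuous_on_infdist[OF continuous_on_id] assms(1)])
  then have "bdd_above ((\<lambda>y. infdist y Z) ` A)"
    by (intro bounded_imp_bdd_above compact_imp_bounded)
  then have "infdist a Z \<le> (SUP y\<in>A. infdist y Z)" using assms(2) by (rule cSUP_upper2) simp
  then show ?thesis unfolding hausdorff_dist_def by simp
qed

lemma hd_L2:
  assumes "compact Z" "z \<in> Z"
  shows "infdist z A \<le> hausdorff_dist Z A"
proof -
  have "compact ((\<lambda>y. infdist y A) ` Z)"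
    by (rule compact_continuous_image[OF continuous_on_infdist[OF continuous_on_id] assms(1)])
  then have "bdd_above ((\<lambda>y. infdist y A) ` Z)"
    by (intro bounded_imp_bdd_above compact_imp_bounded)
  then have "infdist z A \<le> (SUP y\<in>Z. infdist y A)" using assms(2) by (rule cSUP_upper2) simp
  then show ?thesis unfolding hausdorff_dist_def by simp
qed

lemma invariance:
  fixes Z :: "nat \<Rightarrow> complex set" and P :: "complex \<Rightarrow> complex"
  assumes hc: "hausdorff_converges Z A" and cont: "\<And>x. isCont P x"
    and bk: "\<And>m z. z \<in> Z (Suc m) \<Longrightarrow> P z \<in> Z m"
    and a: "a \<in> A"
  shows "P a \<in> A"
proof -
  have A: "A \<noteq> {}" "compact A" and lim: "(\<lambda>m. hausdorff_dist (Z m) A) \<longlonglongrightarrow> 0"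
    and ev: "\<forall>\<^sub>F m in sequentially. Z m \<noteq> {} \<and> compact (Z m)"
    using hc unfolding hausdorff_converges_def by auto
  obtain N where N: "\<And>m. m \<ge> N \<Longrightarrow> Z m \<noteq> {} \<and> compact (Z m)"
    using ev unfolding eventually_sequentially by blast
  define zs where "zs = (\<lambda>m. SOME z. z \<in> Z (m + Suc N) \<and> infdist a (Z (m + Suc N)) = dist a z)"
  have zs: "zs m \<in> Z (m + Suc N) \<and> infdist a (Z (m + Suc N)) = dist a (zs m)" for m
  proof -
    have "Z (m + Suc N) \<noteq> {}" "compact (Z (m + Suc N))" using N[of "m + Suc N"] by auto
    then have "\<exists>z. z \<in> Z (m + Suc N) \<and> infdist a (Z (m + Suc N)) = dist a z"
      using infdist_attains_inf[of "Z (m + Suc N)" a] compact_imp_closed by blast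
    then show ?thesis unfolding zs_def by (rule someI_ex)
  qed
  have lim1: "(\<lambda>m. hausdorff_dist (Z (m + Suc N)) A) \<longlonglongrightarrow> 0"
    using LIMSEQ_ignore_initial_segment[OF lim] .
  have lim2: "(\<lambda>m. hausdorff_dist (Z (m + N)) A) \<longlonglongrightarrow> 0"
    using LIMSEQ_ignore_initial_segment[OF lim] .
  have "(\<lambda>m. dist (zs m) a) \<longlonglongrightarrow> 0"
  proof (rule tendsto_sandwich[OF _ _ tendsto_const lim1])
    show "\<forall>\<^sub>F m in sequentially. 0 \<le> dist (zs m) a" by simp
    show "\<forall>\<^sub>F m in sequentially. dist (zs m) a \<le> hausdorff_dist (Z (m + Suc N)) A"
    proof (rule always_eventually, rule allI)
      fix m
      have "dist (zs m) a = infdist a (Z (m + Suc N))" using zs[of m] by (simp add: dist_commute)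
      also have "\<dots> \<le> hausdorff_dist (Z (m + Suc N)) A" by (rule hd_L1[OF A(2) a])
      finally show "dist (zs m) a \<le> hausdorff_dist (Z (m + Suc N)) A" .
    qed
  qed
  then have "zs \<longlonglongrightarrow> a" using tendsto_dist_iff by blast
  then have l1: "(\<lambda>m. infdist (P (zs m)) A) \<longlonglongrightarrow> infdist (P a) A"
    by (intro tendsto_infdist isCont_tendsto_compose[OF cont])
  have l2: "(\<lambda>m. infdist (P (zs m)) A) \<longlonglongrightarrow> 0"
  proof (rule tendsto_sandwich[OF _ _ tendsto_const lim2])
    show "\<forall>\<^sub>F m in sequentially. 0 \<le> infdist (P (zs m)) A" by (simp add: infdist_nonneg)
    show "\<forall>\<^sub>F m in sequentially. infdist (P (zs m)) A \<le> hausdorff_dist (Z (m + N)) A"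
    proof (rule always_eventually, rule allI)
      fix m
      have "P (zs m) \<in> Z (m + N)" using zs[of m] by (intro bk) simp
      moreover have "compact (Z (m + N))" using N by simp
      ultimately show "infdist (P (zs m)) A \<le> hausdorff_dist (Z (m + N)) A"
        using hd_L2 by blast
    qed
  qed
  have "infdist (P a) A = 0" using LIMSEQ_unique[OF l1 l2] .
  then show ?thesis using in_closed_iff_infdist_zero[OF compact_imp_closed[OF A(2)] A(1)] by blast
qed

definition pP :: "'a set \<Rightarrow> ('a \<Rightarrow> 'a \<Rightarrow> bool) \<Rightarrow> complex poly" where
  "pP V E = (\<Sum>S\<in>ISet V E - {{}}. monom 1 (card S))"

lemma poly_pP: "finite V \<Longrightarrow> poly (pP V E) z = Pg V E z"
  unfolding pP_def Pg_eq by (simp add: poly_sum poly_monom)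

lemma Pg_cnj: "finite V \<Longrightarrow> Pg V E (cnj z) = cnj (Pg V E z)"
  unfolding Pg_eq by simp

lemma coeff_pP: "finite V \<Longrightarrow> coeff (pP V E) j = of_nat (card {S\<in>ISet V E - {{}}. card S = j})"
proof -
  assume "finite V"
  have "coeff (pP V E) j = (\<Sum>S\<in>ISet V E - {{}}. if card S = j then 1 else 0)"
    unfolding pP_def coeff_sum by (simp add: coeff_monom)
  also have "\<dots> = of_nat (card {S\<in>ISet V E - {{}}. card S = j})"
    using finite_ISet[OF \<open>finite V\<close>, of E] by (simp add: sum.inter_filter[symmetric])
  finally show ?thesis .
qed

lemma coeff_pP_0: "finite V \<Longrightarrow> coeff (pP V E) 0 = 0"
proof -
  assume f: "finite V"
  have "{S\<in>ISet V E - {{}}. card S = 0} = {}"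
    using f unfolding ISet_def by (auto dest: finite_subset)
  then show ?thesis unfolding coeff_pP[OF f] by (metis card.empty of_nat_0)
qed

lemma coeff_pP_1:
  assumes "finite V" "\<forall>x. \<not> E x x"
  shows "coeff (pP V E) 1 = of_nat (card V)"
proof -
  have "{S\<in>ISet V E - {{}}. card S = 1} = (\<lambda>x. {x}) ` V"
    using assms unfolding ISet_def independent_set_def by (auto simp: card_Suc_eq)
  moreover have "card ((\<lambda>x. {x}) ` V) = card V" by (rule card_image) (simp add: inj_on_def)
  ultimately show ?thesis unfolding coeff_pP[OF assms(1)] by simp
qed

lemma coeff_pP_big:
  assumes "finite V" "E x y" "x \<in> V" "y \<in> V" "card V \<le> j"
  shows "coeff (pP V E) j = 0"
proof -
  have "{S\<in>ISet V E - {{}}. card S = j} = {}"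
  proof (rule ccontr)
    assume "{S\<in>ISet V E - {{}}. card S = j} \<noteq> {}"
    then obtain S where S: "S \<subseteq> V" "independent_set E S" "card S = j" unfolding ISet_def by auto
    then have "S = V" using assms card_subset_eq[of V S] card_mono[of V S] by auto
    then show False using S(2) assms unfolding independent_set_def by auto
  qed
  then show ?thesis unfolding coeff_pP[OF assms(1)] by (metis card.empty of_nat_0)
qed

lemma coeff_lin_pow_1: "coeff ([:a, 1:] ^ k) 1 = of_nat k * (a::complex) ^ (k - 1)"
proof (induction k)
  case (Suc k)
  have "coeff ([:a, 1:] ^ Suc k) 1 = a * coeff ([:a, 1:] ^ k) 1 + coeff ([:a, 1:] ^ k) 0"
    by (simp add: mult_pCons_left One_nat_def algebra_simps)
  also have "coeff ([:a, 1:] ^ k) 0 = a ^ k" by (simp add: coeff_0_power)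
  finally show ?case using Suc by (cases k) (auto simp: algebra_simps)
qed simp


theorem theoremA:
  fixes V :: "'a set" and E :: "'a \<Rightarrow> 'a \<Rightarrow> bool" and A :: "complex set"
  assumes "finite_simple_graph V E"
    and "hausdorff_converges (lex_power_zeros V E) A"
  shows "\<not> is_circle A"
proof
  assume "is_circle A"
  then obtain c r where r: "r > 0" and Aeq: "A = sphere c r" unfolding is_circle_def by blast
  have fV: "finite V" and irr: "\<forall>x. \<not> E x x" and inV: "\<forall>x y. E x y \<longrightarrow> x \<in> V \<and> y \<in> V"
    using assms(1) unfolding finite_simple_graph_def by auto
  define P where "P = Pg V E"
  define Z where "Z = lex_power_zeros V E"
  have Zeq: "Z m = {z. (P ^^ m) z = -1}" for m
    unfolding Z_def P_def by (rule zeros_funpow[where V=V and E=E, OF fV irr])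
  have hc: "hausdorff_converges Z A" using assms(2) unfolding Z_def .
  have ZS: "Z (Suc m) = {z. P z \<in> Z m}" for m
    unfolding Zeq by (simp only: funpow_Suc_right o_apply mem_Collect_eq)
  have cA: "compact A" using hc unfolding hausdorff_converges_def by auto
  show False
  proof (cases "\<exists>x y. E x y")
    case True
    then obtain x y where xy: "E x y" "x \<in> V" "y \<in> V" using inV by blast
    define p where "p = pP V E"
    define n where "n = card V"
    have Pp: "P z = poly p z" for z unfolding P_def p_def by (simp add: poly_pP[OF fV])
    have cont: "isCont P z" for z unfolding Pp[abs_def] by simp
    have inv: "\<forall>z. dist c z = r \<longrightarrow> dist c (poly p z) = r"
    proof (intro allI impI)
      fix z assume "dist c z = r"
      then have "z \<in> A" unfolding Aeq by simp
      have "P z \<in> A" by (rule invariance[OF hc cont _ \<open>z \<in> A\<close>]) (simp add: ZS)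
      then show "dist c (poly p z) = r" unfolding Aeq Pp by simp
    qed
    have conj: "\<forall>z. poly p (cnj z) = cnj (poly p z)"
      unfolding Pp[symmetric] P_def using Pg_cnj[OF fV] by blast
    obtain \<mu> k where mu: "\<mu> \<noteq> 0" and peq: "p = [:c:] + smult \<mu> ([:-c,1:]^k)"
      using circle_poly[OF conj r inv] by blast
    have n1: "n \<ge> 1" unfolding n_def using xy fV card_gt_0_iff[of V] by (auto simp: Suc_le_eq)
    have h0: "c + \<mu> * (-c)^k = 0"
      using coeff_pP_0[OF fV, of E] unfolding p_def[symmetric] peq by (simp add: coeff_0_power)
    have h1: "\<mu> * (of_nat k * (-c)^(k-1)) = of_nat n"
      using coeff_pP_1[where V=V and E=E, OF fV irr] coeff_lin_pow_1[of "-c" k]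
      unfolding p_def[symmetric] peq n_def[symmetric] by simp
    have kpos: "k \<ge> 1"
    proof (rule ccontr)
      assume "\<not> k \<ge> 1" then have "k = 0" by simp
      then show False using h1 n1 by simp
    qed
    have hk: "coeff p k = \<mu>"
    proof -
      have a1: "coeff [:c:] k = 0" using kpos by (cases k) auto
      have a2: "coeff ([:-c,1:]^k) k = 1" by (rule coeff_linear_power)
      show ?thesis unfolding peq coeff_add coeff_smult a1 a2 by simp
    qed
    have kn: "k < n"
    proof (rule ccontr)
      assume "\<not> k < n"
      then have "coeff p k = 0" unfolding p_def n_def using coeff_pP_big[where V=V and E=E and x=x and y=y, OF fV xy] by simp
      then show False using hk mu by simp
    qed
    show False
    proof (cases "c = 0")
      case True
      have k1: "k = 1"
      proof (rule ccontr)
        assume "k \<noteq> 1" then have "k - 1 \<noteq> 0" using kpos by simp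
        then have z: "(0::complex) ^ (k - 1) = 0" by simp
        have "(of_nat n::complex) = \<mu> * (of_nat k * (-c)^(k-1))" using h1 by simp
        also have "\<dots> = 0" unfolding True minus_zero z by simp
        finally show False using n1 by simp
      qed
      then have mun: "\<mu> = of_nat n" using h1 by simp
      have "poly p (of_real r) = of_nat n * of_real r" unfolding peq using True k1 mun by simp
      moreover have "dist c (poly p (of_real r)) = r" using inv True r by simp
      ultimately have "of_nat n * r = r" using True r by (simp add: norm_mult)
      then have "n = 1" using r by simp
      then show False using kn k1 by simp
    next
      case False
      have pk: "(-c)^k = (-c)^(k-1) * (-c)" using kpos power_minus_mult[of k "-c"] by simp
      have "\<mu> * (-c)^k = (c + \<mu> * (-c)^k) - c" by simp
      also have "\<dots> = -c" unfolding h0 by simp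
      finally have "\<mu> * (-c)^(k-1) * (-c) = -c" unfolding pk by (simp add: mult.assoc)
      then have one: "\<mu> * (-c)^(k-1) = 1" using False by simp
      have "(of_nat n :: complex) = \<mu> * (of_nat k * (-c)^(k-1))" using h1 by simp
      also have "\<dots> = of_nat k * (\<mu> * (-c)^(k-1))" by (simp only: mult.left_commute)
      also have "\<dots> = of_nat k" unfolding one by simp
      finally have "of_nat k = (of_nat n :: complex)" by simp
      then show False using kn by simp
    qed
  next
    case False
    then have noE: "\<And>x y. \<not> E x y" by blast
    show False
    proof (cases "V = {}")
      case True
      have "ISet V E = {{}}" unfolding ISet_def True independent_set_def by auto
      then have P0: "P z = 0" for z unfolding P_def Pg_def indep_poly_ISet by simp
      have "Z (Suc m) = {}" for m unfolding Zeq by (simp add: P0)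
      moreover obtain N where "\<And>m. m \<ge> N \<Longrightarrow> Z m \<noteq> {}" using hc unfolding hausdorff_converges_def
        eventually_sequentially by blast
      ultimately show False by (metis le_Suc_eq order_refl)
    next
      case Vne: False
      have "ISet V E = Pow V" unfolding ISet_def independent_set_def using noE by auto
      have Ip: "indep_poly V E z = (z + 1) ^ card V" for z
      proof -
        have "indep_poly V E z = (\<Sum>X\<in>Pow V. (\<Prod>x\<in>X. z) * (\<Prod>x\<in>V - X. 1))"
          unfolding indep_poly_ISet \<open>ISet V E = Pow V\<close> by simp
        also have "\<dots> = (\<Prod>x\<in>V. z + 1)" by (rule prod_add[OF fV, symmetric])
        finally show ?thesis by simp
      qed
      have cV: "card V > 0" using Vne fV by (simp add: card_gt_0_iff)
      have Pm1: "P z = -1 \<longleftrightarrow> z = -1" for z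
      proof -
        have "P z = -1 \<longleftrightarrow> (z + 1) ^ card V = 0" unfolding P_def Pg_def Ip by auto
        also have "\<dots> \<longleftrightarrow> z + 1 = 0" using cV by simp
        also have "\<dots> \<longleftrightarrow> z = -1" by (rule add_eq_0_iff2)
        finally show ?thesis .
      qed
      have Z1: "Z m = {-1}" for m
      proof (induction m)
        case 0 then show ?case unfolding Zeq by auto
      next
        case (Suc m) then show ?case unfolding ZS using Pm1 by auto
      qed
      have "(\<lambda>m. hausdorff_dist {-1} A) \<longlonglongrightarrow> 0"
        using hc unfolding hausdorff_converges_def Z1 by simp
      then have hd0: "hausdorff_dist {-1} A = 0" by (simp add: LIMSEQ_const_iff)
      obtain y where y: "y \<in> A" "y \<noteq> -1"
      proof (cases "c + of_real r = -1")
        case True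
        show ?thesis
        proof (rule that[of "c - of_real r"])
          show "c - of_real r \<in> A" unfolding Aeq using r by (simp add: dist_norm)
          show "c - of_real r \<noteq> -1"
          proof
            assume h: "c - of_real r = -1"
            have "complex_of_real (2 * r) = (c + of_real r) - (c - of_real r)" by simp
            also have "\<dots> = 0" using True h by simp
            finally show False using r by simp
          qed
        qed
      next
        case False
        show ?thesis
          by (rule that[of "c + of_real r"]) (use False r in \<open>simp_all add: Aeq dist_norm\<close>)
      qed
      have "infdist y {-1} \<le> hausdorff_dist {-1} A" by (rule hd_L1[OF cA y(1)])
      moreover have "infdist y {-1} > 0" using y(2) by simp
      ultimately show False using hd0 by simp
    qed
  qed
qed

end
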